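(* Let $V\subset Z^n$ be finite, let $C$ be the cluster of unit cubes in $\mathbb{R}^n$ centered at the points of $V$, and let $\mathcal{M}$ be the lattice generated by $\tfrac12 e_1,e_2,\dots,e_n$. If there is an Abelian group $G$ of order $2|V|$ and a homomorphism $\phi:\mathcal{M}\to G$ such that the restriction of $\phi$ to $W=V\cup(V+\tfrac12 e_1)$ is a bijection onto $G$ and $\phi(e_i)$ is a generator of $G$ for some $i\ge 2$, then there is a non-regular lattice tiling of $\mathbb{R}^n$ by $C$.
   Context: A unit cube centered at $c\in\mathbb{R}^n$ is $c+[-\tfrac12,\tfrac12]^n$. A lattice tiling of $\mathbb{R}^n$ by $C$ is a family $\{C+l;\ l\in\mathcal{L}\}$ with $\mathcal{L}$ a lattice, whose members have pairwise disjoint interiors and cover $\mathbb{R}^n$. Two unit cubes with centers $c,c'$ are neighbors if there is an index $i$ with $|c_i-c_i'|=1$ and $c_j=c_j'$ for all $j\ne i$. A tiling by clusters of cubes is non-regular if it contains two cubes from different tiles whose intersection is $(n-1)$-dimensional but which are not neighbors. *)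

theory Defs
  imports "HOL-Analysis.Analysis" "HOL-Algebra.Generated_Groups"
begin

definition unit_cube :: "real^'n \<Rightarrow> (real^'n) set" where
  "unit_cube c = {x. \<forall>j. \<bar>x$j - c$j\<bar> \<le> 1/2}"

definition cluster :: "(real^'n) set \<Rightarrow> (real^'n) set" where
  "cluster V = (\<Union>v\<in>V. unit_cube v)"

definition integer_point :: "real^'n \<Rightarrow> bool" where
  "integer_point v \<longleftrightarrow> (\<forall>j. v$j \<in> \<int>)"

definition is_lattice :: "(real^'n) set \<Rightarrow> bool" where
  "is_lattice L \<longleftrightarrow> (\<exists>B::real^'n^'n. invertible B \<and>
      L = range (\<lambda>z::int^'n. B *v (\<chi> j. of_int (z$j))))"

definition lattice_tiling :: "(real^'n) set \<Rightarrow> (real^'n) set \<Rightarrow> bool" where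
  "lattice_tiling C L \<longleftrightarrow> is_lattice L \<and>
     (\<forall>l\<in>L. \<forall>l'\<in>L. l \<noteq> l' \<longrightarrow>
         interior ((\<lambda>x. x + l) ` C) \<inter> interior ((\<lambda>x. x + l') ` C) = {}) \<and>
     (\<Union>l\<in>L. (\<lambda>x. x + l) ` C) = UNIV"

definition cube_neighbors :: "real^'n \<Rightarrow> real^'n \<Rightarrow> bool" where
  "cube_neighbors c c' \<longleftrightarrow>
     (\<exists>i. \<bar>c$i - c'$i\<bar> = 1 \<and> (\<forall>j. j \<noteq> i \<longrightarrow> c$j = c'$j))"

definition non_regular_tiling :: "(real^'n) set \<Rightarrow> (real^'n) set \<Rightarrow> bool" where
  "non_regular_tiling V L \<longleftrightarrow>
     (\<exists>l\<in>L. \<exists>l'\<in>L. \<exists>v\<in>V. \<exists>v'\<in>V. l \<noteq> l' \<and>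
        aff_dim (unit_cube (v + l) \<inter> unit_cube (v' + l')) = int CARD('n) - 1 \<and>
        \<not> cube_neighbors (v + l) (v' + l'))"

text \<open>The lattice M generated by (1/2) e_k and e_j (j \<noteq> k), where k plays
  the role of the first coordinate, viewed as an additive group.\<close>
definition half_lattice :: "'n \<Rightarrow> (real^'n) set" where
  "half_lattice k = {x. 2 * x$k \<in> \<int> \<and> (\<forall>j. j \<noteq> k \<longrightarrow> x$j \<in> \<int>)}"

definition half_lattice_group :: "'n \<Rightarrow> (real^'n) monoid" where
  "half_lattice_group k = \<lparr>carrier = half_lattice k, monoid.mult = (+), one = 0\<rparr>"

end

theory Submission
  imports Defs "HOL-Algebra.Multiplicative_Group"
begin



lemma hl_add: "x \<in> half_lattice k \<Longrightarrow> y \<in> half_lattice k \<Longrightarrow> x + y \<in> half_lattice k"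
  by (auto simp: half_lattice_def distrib_left)
lemma hl_uminus: "x \<in> half_lattice k \<Longrightarrow> - x \<in> half_lattice k"
  by (auto simp: half_lattice_def)
lemma hl_diff: "x \<in> half_lattice k \<Longrightarrow> y \<in> half_lattice k \<Longrightarrow> x - y \<in> half_lattice k"
  by (auto simp: half_lattice_def right_diff_distrib)
lemma hl_zero: "0 \<in> half_lattice k"
  by (auto simp: half_lattice_def)
lemma hl_int: "integer_point x \<Longrightarrow> x \<in> half_lattice k"
  by (auto simp: half_lattice_def integer_point_def)
lemma hl_axis: "axis j 1 \<in> half_lattice k"
  by (auto simp: half_lattice_def axis_def)
lemma hl_half: "(1/2) *\<^sub>R axis k 1 \<in> half_lattice k"
  by (auto simp: half_lattice_def axis_def)
lemma hl_intmult: "x \<in> half_lattice k \<Longrightarrow> of_int m *\<^sub>R x \<in> half_lattice k"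
proof -
  assume x: "x \<in> half_lattice k"
  have "2 * (of_int m * x $ k) = of_int m * (2 * x$k)" by simp
  moreover have "of_int m * (2 * x$k) \<in> \<int>" using x by (auto simp: half_lattice_def)
  ultimately have "2 * (of_int m * x $ k) \<in> \<int>" by metis
  moreover have "\<forall>j. j \<noteq> k \<longrightarrow> of_int m * x$j \<in> \<int>" using x by (auto simp: half_lattice_def)
  ultimately show ?thesis by (simp add: half_lattice_def del: mult.left_commute)
qed

locale hsetup = comm_group G for G :: "('g, 'b) monoid_scheme" (structure) +
  fixes \<phi> :: "real^'n \<Rightarrow> 'g" and k :: 'n
  assumes hom: "\<phi> \<in> hom (half_lattice_group k) G"
begin

lemma phi_add: "x \<in> half_lattice k \<Longrightarrow> y \<in> half_lattice k \<Longrightarrow> \<phi> (x + y) = \<phi> x \<otimes> \<phi> y"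
  using hom by (auto simp: hom_def half_lattice_group_def)
lemma phi_carrier: "x \<in> half_lattice k \<Longrightarrow> \<phi> x \<in> carrier G"
  using hom by (auto simp: hom_def half_lattice_group_def)
lemma phi_zero: "\<phi> 0 = \<one>"
proof -
  have "\<phi> 0 = \<phi> 0 \<otimes> \<phi> 0" using phi_add[OF hl_zero hl_zero] by simp
  then show ?thesis using phi_carrier[OF hl_zero]
    by (metis l_cancel_one r_one)
qed
lemma phi_uminus: "x \<in> half_lattice k \<Longrightarrow> \<phi> (- x) = inv (\<phi> x)"
proof -
  assume x: "x \<in> half_lattice k"
  have "\<phi> (x + - x) = \<phi> x \<otimes> \<phi> (-x)" using phi_add[OF x hl_uminus[OF x]] .
  then have "\<phi> x \<otimes> \<phi> (-x) = \<one>" using phi_zero by simp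
  then show ?thesis using x phi_carrier hl_uminus
    by (metis inv_equality m_comm)
qed
lemma phi_diff: "x \<in> half_lattice k \<Longrightarrow> y \<in> half_lattice k \<Longrightarrow> \<phi> (x - y) = \<phi> x \<otimes> inv (\<phi> y)"
  using phi_add[of x "-y"] phi_uminus[of y] hl_uminus[of y] by simp
lemma phi_natmult: "x \<in> half_lattice k \<Longrightarrow> \<phi> (of_nat m *\<^sub>R x) = \<phi> x [^] m"
proof (induction m)
  case 0 then show ?case using phi_zero by simp
next
  case (Suc m)
  have "of_nat (Suc m) *\<^sub>R x = of_nat m *\<^sub>R x + x" by (simp add: algebra_simps)
  moreover have "of_nat m *\<^sub>R x \<in> half_lattice k" using hl_intmult[OF Suc.prems, of "int m"] by simp
  ultimately show ?case using Suc phi_add phi_carrier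
    by (simp add: nat_pow_Suc)
qed
lemma phi_intmult: "x \<in> half_lattice k \<Longrightarrow> \<phi> (of_int m *\<^sub>R x) = \<phi> x [^] m"
proof (cases "m \<ge> 0")
  case True
  assume x: "x \<in> half_lattice k"
  then show ?thesis using True phi_natmult[OF x, of "nat m"]
    by (metis int_nat_eq int_pow_int of_int_of_nat_eq)
next
  case False
  assume x: "x \<in> half_lattice k"
  have e: "of_int m *\<^sub>R x = - (of_nat (nat (-m)) *\<^sub>R x)" using False by simp
  have "of_nat (nat (-m)) *\<^sub>R x \<in> half_lattice k" using hl_intmult[OF x, of "-m"] False by simp
  then have "\<phi> (of_int m *\<^sub>R x) = inv (\<phi> x [^] nat (-m))"
    using e phi_uminus phi_natmult[OF x] by simp
  also have "\<dots> = \<phi> x [^] m" using False phi_carrier[OF x]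
    by (metis int_pow_int int_pow_neg nat_0_le neg_0_le_iff_le nle_le minus_minus)
  finally show ?thesis .
qed

end



definition hb :: "'n \<Rightarrow> real^'n \<Rightarrow> (real^'n) set" where
  "hb k m = {y. m$k - 1/2 \<le> y$k \<and> y$k \<le> m$k \<and> (\<forall>j. j \<noteq> k \<longrightarrow> \<bar>y$j - m$j\<bar> \<le> 1/2)}"

lemma cube_hb: "y \<in> unit_cube c \<Longrightarrow> y \<in> hb k c \<or> y \<in> hb k (c + (1/2) *\<^sub>R axis k 1)"
proof -
  assume y: "y \<in> unit_cube c"
  then have a: "\<forall>j. \<bar>y$j - c$j\<bar> \<le> 1/2" by (simp add: unit_cube_def)
  then have "\<bar>y$k - c$k\<bar> \<le> 1/2" by blast
  then have k1: "c$k - 1/2 \<le> y$k" "y$k \<le> c$k + 1/2" by arith+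
  show ?thesis
  proof (cases "y$k \<le> c$k")
    case True
    then show ?thesis using a k1 by (simp add: hb_def)
  next
    case False
    then show ?thesis using a k1 by (simp add: hb_def axis_def)
  qed
qed

lemma hb_cube1: "hb k c \<subseteq> unit_cube c"
proof
  fix x assume x: "x \<in> hb k c"
  have "\<bar>x$j - c$j\<bar> \<le> 1/2" for j
    using x by (cases "j = k") (auto simp: hb_def)
  then show "x \<in> unit_cube c" by (simp add: unit_cube_def)
qed
lemma hb_cube2: "hb k (c + (1/2) *\<^sub>R axis k 1) \<subseteq> unit_cube c"
proof
  fix x assume x: "x \<in> hb k (c + (1/2) *\<^sub>R axis k 1)"
  have "\<bar>x$j - c$j\<bar> \<le> 1/2" for j
    using x by (cases "j = k") (auto simp: hb_def axis_def)
  then show "x \<in> unit_cube c" by (simp add: unit_cube_def)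
qed

lemma hb_cover: fixes y :: "real^'n" and k :: 'n shows "\<exists>m \<in> half_lattice k. y \<in> hb k m"
proof -
  define m :: "real^'n" where "m = (\<chi> j. if j = k then of_int (ceiling (2 * y$k)) / 2 else of_int (floor (y$j + 1/2)))"
  have "m \<in> half_lattice k" by (simp add: m_def half_lattice_def)
  moreover have "y \<in> hb k m"
  proof -
    have a: "2 * y$k \<le> of_int (ceiling (2 * y$k))" "of_int (ceiling (2 * y$k)) < 2 * y$k + 1"
      by linarith+
    have b: "of_int (floor (y$j + 1/2)) \<le> y$j + 1/2" "y$j + 1/2 < of_int (floor (y$j + 1/2)) + 1" for j
      by linarith+
    have mk: "m$k = of_int (ceiling (2 * y$k)) / 2" by (simp add: m_def)
    have mj: "m$j = of_int (floor (y$j + 1/2))" if "j \<noteq> k" for j using that by (simp add: m_def)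
    have 1: "m$k - 1/2 \<le> y$k" "y$k \<le> m$k" using a mk by linarith+
    have 2: "\<bar>y$j - m$j\<bar> \<le> 1/2" if "j \<noteq> k" for j
      unfolding abs_le_iff using b[of j] mj[OF that] by linarith
    show ?thesis unfolding hb_def using 1 2 by blast
  qed
  ultimately show ?thesis by blast
qed

lemma hb_uniq:
  assumes y: "\<forall>j. 2 * y$j \<notin> \<int>" and m: "m \<in> half_lattice k" and m': "m' \<in> half_lattice k"
    and ym: "y \<in> hb k m" and ym': "y \<in> hb k m'"
  shows "m = m'"
proof -
  have "m$j = m'$j" for j
  proof (cases "j = k")
    case True
    obtain a where a: "2 * m$k = of_int a" using m by (auto simp: half_lattice_def elim: Ints_cases)
    obtain a' where a': "2 * m'$k = of_int a'" using m' by (auto simp: half_lattice_def elim: Ints_cases)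
    have ne: "2 * y$k \<noteq> of_int a" "2 * y$k \<noteq> of_int a'" "2 * y$k \<noteq> of_int a - 1" "2 * y$k \<noteq> of_int a' - 1"
      using y by (metis Ints_of_int of_int_diff of_int_1)+
    have "of_int a - 1 \<le> 2 * y$k" "2 * y$k \<le> of_int a" "of_int a' - 1 \<le> 2 * y$k" "2 * y$k \<le> of_int a'"
      using ym ym' a a' by (auto simp: hb_def)
    then have "of_int a < 2 * y$k + 1" "2 * y$k < of_int a" "of_int a' < 2 * y$k + 1" "2 * y$k < of_int a'"
      using ne by linarith+
    then have "of_int a < (of_int a' + 1 :: real)" "of_int a' < (of_int a + 1 :: real)" by linarith+
    then have "a = a'" by linarith
    then show ?thesis using a a' True by simp
  next
    case False
    obtain b where b: "m$j = of_int b" using m False by (auto simp: half_lattice_def elim: Ints_cases)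
    obtain b' where b': "m'$j = of_int b'" using m' False by (auto simp: half_lattice_def elim: Ints_cases)
    have ne: "2 * y$j \<noteq> 2 * of_int b - 1" "2 * y$j \<noteq> 2 * of_int b + 1"
             "2 * y$j \<noteq> 2 * of_int b' - 1" "2 * y$j \<noteq> 2 * of_int b' + 1"
      using y by (metis Ints_of_int of_int_mult of_int_numeral of_int_diff of_int_add of_int_1)+
    have "\<bar>y$j - of_int b\<bar> \<le> 1/2" "\<bar>y$j - of_int b'\<bar> \<le> 1/2"
      using ym ym' b b' False by (auto simp: hb_def)
    then have "y$j - of_int b \<le> 1/2" "of_int b - y$j \<le> 1/2" "y$j - of_int b' \<le> 1/2" "of_int b' - y$j \<le> 1/2"
      unfolding abs_le_iff by linarith+
    then have "y$j - of_int b < 1/2" "of_int b - y$j < 1/2" "y$j - of_int b' < 1/2" "of_int b' - y$j < 1/2"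
      using ne by linarith+
    then have "of_int b < (of_int b' + 1 :: real)" "of_int b' < (of_int b + 1 :: real)" by linarith+
    then have "b = b'" by linarith
    then show ?thesis using b b' by simp
  qed
  then show ?thesis by (simp add: vec_eq_iff)
qed

lemma generic_point:
  fixes y :: "real^'n"
  assumes "e > 0"
  shows "\<exists>z. dist y z < e \<and> (\<forall>j. 2 * z$j \<notin> \<int>)"
proof -
  define d where "d = e / real CARD('n)"
  have d: "d > 0" using assms by (simp add: d_def)
  have ex: "\<exists>t. t \<in> {y$j <..< y$j + d} \<and> 2 * t \<notin> \<int>" for j
  proof -
    have "countable ((\<lambda>n::int. of_int n / (2::real)) ` UNIV)" by simp
    moreover have "{t. 2 * t \<in> \<int>} \<subseteq> (\<lambda>n::int. of_int n / (2::real)) ` UNIV"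
      by (auto elim!: Ints_cases intro!: image_eqI[where x="_"] simp: field_simps)
    ultimately have c: "countable {t::real. 2 * t \<in> \<int>}" by (rule countable_subset[rotated])
    have "uncountable {y$j <..< y$j + d}" using d by (simp add: uncountable_open_interval)
    then have "{y$j <..< y$j + d} - {t. 2 * t \<in> \<int>} \<noteq> {}"
      using c by (metis countable_subset Diff_eq_empty_iff)
    then show ?thesis by blast
  qed
  then obtain zf where zf: "\<And>j. zf j \<in> {y$j <..< y$j + d} \<and> 2 * zf j \<notin> \<int>" by metis
  define z :: "real^'n" where "z = (\<chi> j. zf j)"
  have "dist y z = norm (z - y)" by (simp add: dist_norm norm_minus_commute)
  also have "\<dots> \<le> (\<Sum>j\<in>UNIV. \<bar>(z - y)$j\<bar>)" by (rule norm_le_l1_cart)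
  also have "\<dots> < (\<Sum>j\<in>(UNIV::'n set). d)"
  proof (rule sum_strict_mono)
    fix j :: 'n show "\<bar>(z - y)$j\<bar> < d" using zf[of j] by (auto simp: z_def abs_less_iff)
  qed auto
  also have "\<dots> = e" by (simp add: d_def)
  finally show ?thesis using zf by (auto simp: z_def)
qed

lemma translate_cube: "(\<lambda>x. x + l) ` unit_cube v = unit_cube (v + l)"
proof
  show "(\<lambda>x. x + l) ` unit_cube v \<subseteq> unit_cube (v + l)"
    by (auto simp: unit_cube_def)
next
  show "unit_cube (v + l) \<subseteq> (\<lambda>x. x + l) ` unit_cube v"
  proof
    fix y assume "y \<in> unit_cube (v + l)"
    then have "y - l \<in> unit_cube v" by (simp add: unit_cube_def algebra_simps)
    then show "y \<in> (\<lambda>x. x + l) ` unit_cube v" by (rule image_eqI[rotated]) simp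
  qed
qed

lemma translate_cluster: "(\<lambda>x. x + l) ` cluster V = (\<Union>v\<in>V. unit_cube (v + l))"
  unfolding cluster_def image_UN translate_cube ..




lemma half_not_int: "(x::real) \<in> \<int> \<Longrightarrow> x + 1/2 \<notin> \<int>"
proof
  assume "x \<in> \<int>" "x + 1/2 \<in> \<int>"
  then have "(x + 1/2) - x \<in> \<int>" by (rule Ints_diff[rotated])
  then obtain n :: int where "of_int n = (1/2::real)" by (auto elim: Ints_cases)
  then have "2 * of_int n = (1::real)" by simp
  then have "2 * n = 1" by (metis of_int_eq_1_iff of_int_mult of_int_numeral)
  then show False by presburger
qed

context hsetup begin

lemma part1:
  fixes V :: "(real^'n) set" and i :: 'n
  assumes finV: "finite V" and intV: "\<forall>v\<in>V. integer_point v"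
    and bij: "bij_betw \<phi> (V \<union> (\<lambda>v. v + (1/2) *\<^sub>R axis k 1) ` V) (carrier G)"
    and ik: "i \<noteq> k" and gen: "generate G {\<phi> (axis i 1)} = carrier G"
  shows "is_lattice {x \<in> half_lattice k. \<phi> x = \<one>}"
proof -
  define h :: "real^'n" where "h = (1/2) *\<^sub>R axis k 1"
  define W where "W = V \<union> (\<lambda>v. v + h) ` V"
  define K where "K = {x \<in> half_lattice k. \<phi> x = \<one>}"
  have VM: "v \<in> half_lattice k" if "v \<in> V" for v using intV hl_int that by blast
  have WM: "W \<subseteq> half_lattice k" using VM hl_add[OF VM hl_half] by (auto simp: W_def h_def)
  have finG: "finite (carrier G)" using bij finV bij_betw_finite by (auto simp: W_def h_def)
  define g where "g = \<phi> (axis i 1)"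
  have gc: "g \<in> carrier G" unfolding g_def by (rule phi_carrier[OF hl_axis])
  define N where "N = ord g"
  have N1: "N \<ge> 1" using ord_ge_1[OF finG gc] by (simp add: N_def)
  have pows: "\<And>x. x \<in> carrier G \<Longrightarrow> \<exists>n::nat. x = g [^] n"
    using generate_pow_nat[OF gc] N1 gen by (auto simp: N_def g_def)
  have K0: "0 \<in> K" by (simp add: K_def phi_zero hl_zero)
  have Kadd: "x \<in> K \<Longrightarrow> y \<in> K \<Longrightarrow> x + y \<in> K" for x y
    by (simp add: K_def phi_add hl_add)
  have Kdiff: "x \<in> K \<Longrightarrow> y \<in> K \<Longrightarrow> x - y \<in> K" for x y
    by (simp add: K_def phi_diff hl_diff)
  have Kmult: "x \<in> K \<Longrightarrow> a \<in> \<int> \<Longrightarrow> a *\<^sub>R x \<in> K" for x a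
    by (auto simp: K_def phi_intmult hl_intmult elim!: Ints_cases)
  have Ksum: "finite S \<Longrightarrow> (\<forall>j\<in>S. a j \<in> K) \<longrightarrow> (\<forall>j\<in>S. z j \<in> \<int>) \<longrightarrow> (\<Sum>j\<in>S. z j *\<^sub>R a j) \<in> K"
    for S and a :: "'n \<Rightarrow> real^'n" and z
    by (induction S rule: finite_induct) (auto simp: K0 Kadd Kmult)
  define c :: "'n \<Rightarrow> real" where "c j = (if j = k then 1/2 else 1)" for j
  have cM: "c j *\<^sub>R axis j 1 \<in> half_lattice k" for j
    by (auto simp: c_def hl_axis hl_half)
  have c0: "c j \<noteq> 0" for j by (simp add: c_def)
  define \<gamma> :: "'n \<Rightarrow> nat" where "\<gamma> j = (SOME n. \<phi> (c j *\<^sub>R axis j 1) = g [^] n)" for j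
  have \<gamma>: "\<phi> (c j *\<^sub>R axis j 1) = g [^] \<gamma> j" for j
    unfolding \<gamma>_def using someI_ex[OF pows[OF phi_carrier[OF cM]]] by metis
  define f :: "'n \<Rightarrow> real^'n" where
    "f j = (if j = i then real N *\<^sub>R axis i 1 else c j *\<^sub>R axis j 1 - real (\<gamma> j) *\<^sub>R axis i 1)" for j
  have fK: "f j \<in> K" for j
  proof (cases "j = i")
    case True
    then show ?thesis using phi_natmult[OF hl_axis] hl_intmult[OF hl_axis, of "int N"] gc
      by (simp add: K_def f_def N_def g_def)
  next
    case False
    have m: "real (\<gamma> j) *\<^sub>R axis i 1 \<in> half_lattice k" using hl_intmult[OF hl_axis, of "int (\<gamma> j)"] by simp
    have "\<phi> (f j) = g [^] \<gamma> j \<otimes> inv (g [^] \<gamma> j)"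
      using False phi_diff[OF cM m] phi_natmult[OF hl_axis] \<gamma> by (simp add: f_def g_def)
    also have "\<dots> = \<one>" using gc by simp
    finally show ?thesis using False hl_diff[OF cM m] by (simp add: K_def f_def)
  qed
  define F where "F z = (\<Sum>j\<in>UNIV. z$j *\<^sub>R f j)" for z :: "real^'n"
  have Fcomp: "F z $ r = (if r = i then z$i * real N - (\<Sum>j\<in>UNIV-{i}. z$j * real (\<gamma> j)) else z$r * c r)" for z r
  proof -
    have e: "F z $ r = z$i * (f i $ r) + (\<Sum>j\<in>UNIV-{i}. z$j * (f j $ r))"
      by (simp add: F_def sum.remove)
    show ?thesis
    proof (cases "r = i")
      case True
      have "(\<Sum>j\<in>UNIV-{i}. z$j * (f j $ r)) = (\<Sum>j\<in>UNIV-{i}. - (z$j * real (\<gamma> j)))"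
        using True by (intro sum.cong) (auto simp: f_def axis_def)
      then show ?thesis using e True by (simp add: f_def sum_negf)
    next
      case False
      have "(\<Sum>j\<in>UNIV-{i}. z$j * (f j $ r)) = (\<Sum>j\<in>UNIV-{i}. if j = r then z$r * c r else 0)"
        using False by (intro sum.cong) (auto simp: f_def axis_def)
      also have "\<dots> = z$r * c r" using False by (simp add: sum.delta')
      finally show ?thesis using e False by (simp add: f_def axis_def)
    qed
  qed
  define B :: "real^'n^'n" where "B = (\<chi> r j. f j $ r)"
  have BF: "B *v z = F z" for z
    by (simp add: B_def F_def matrix_vector_mult_def vec_eq_iff mult.commute)
  have inv: "invertible B"
    unfolding invertible_left_inverse matrix_left_invertible_ker
  proof (intro allI impI)
    fix z assume "B *v z = 0"
    then have Fz: "F z = 0" by (simp add: BF)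
    have o: "z$r = 0" if "r \<noteq> i" for r
      using arg_cong[OF Fz, of "\<lambda>v. v$r"] that c0[of r] by (simp add: Fcomp)
    then have "(\<Sum>j\<in>UNIV-{i}. z$j * real (\<gamma> j)) = 0" by simp
    then have "z$i = 0" using arg_cong[OF Fz, of "\<lambda>v. v$i"] N1 by (simp add: Fcomp)
    with o show "z = 0" by (metis vec_eq_iff zero_index)
  qed
  have "K = range (\<lambda>z::int^'n. B *v (\<chi> j. of_int (z$j)))"
  proof
    show "range (\<lambda>z::int^'n. B *v (\<chi> j. of_int (z$j))) \<subseteq> K"
    proof clarify
      fix z :: "int^'n"
      show "B *v (\<chi> j. of_int (z$j)) \<in> K"
        using Ksum[of UNIV f "\<lambda>j. of_int (z$j)"] fK by (simp add: BF F_def)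
    qed
  next
    show "K \<subseteq> range (\<lambda>z::int^'n. B *v (\<chi> j. of_int (z$j)))"
    proof
      fix x assume xK: "x \<in> K"
      then have xM: "x \<in> half_lattice k" by (simp add: K_def)
      define t where "t = x$i + (\<Sum>j\<in>UNIV-{i}. x$j / c j * real (\<gamma> j))"
      define z :: "real^'n" where "z = (\<chi> j. if j = i then t / real N else x$j / c j)"
      have Fz: "F z = x"
        using N1 c0 by (simp add: vec_eq_iff Fcomp z_def t_def)
      have zint: "z$j \<in> \<int>" if "j \<noteq> i" for j
        using xM that by (auto simp: z_def c_def half_lattice_def mult.commute)
      define y where "y = x - (\<Sum>j\<in>UNIV-{i}. z$j *\<^sub>R f j)"
      have yK: "y \<in> K" unfolding y_def
        using Kdiff[OF xK] Ksum[of "UNIV-{i}" f "\<lambda>j. z$j"] fK zint by simp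
      have "x = z$i *\<^sub>R f i + (\<Sum>j\<in>UNIV-{i}. z$j *\<^sub>R f j)"
        using Fz sum.remove[of UNIV i "\<lambda>j. z$j *\<^sub>R f j"] by (simp add: F_def)
      then have "y = z$i *\<^sub>R f i" by (simp add: y_def)
      then have ye: "y = t *\<^sub>R axis i 1"
        using N1 by (simp add: z_def f_def)
      have "y$i \<in> \<int>" using yK ik by (simp add: K_def half_lattice_def)
      then obtain t' where t': "t = of_int t'" using ye by (auto elim: Ints_cases)
      have "\<phi> y = g [^] t'" using ye t' phi_intmult[OF hl_axis] by (simp add: g_def)
      then have "g [^] t' = \<one>" using yK by (simp add: K_def)
      then have "int N dvd t'" using int_pow_eq_id[OF gc] by (simp add: N_def)
      then have "z$i \<in> \<int>" using t' by (auto simp: z_def elim!: dvdE)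
      with zint have zI: "\<forall>j. z$j \<in> \<int>" by metis
      define zz :: "int^'n" where "zz = (\<chi> j. floor (z$j))"
      have "(\<chi> j. of_int (zz$j)) = z" using zI by (simp add: zz_def vec_eq_iff)
      then have "x = B *v (\<chi> j. of_int (zz$j))" by (simp add: BF Fz)
      then show "x \<in> range (\<lambda>z::int^'n. B *v (\<chi> j. of_int (z$j)))" by blast
    qed
  qed
  then show ?thesis using inv unfolding K_def is_lattice_def by blast
qed
end



context hsetup begin

lemma part2:
  fixes V :: "(real^'n) set" and i :: 'n
  assumes finV: "finite V" and intV: "\<forall>v\<in>V. integer_point v"
    and bij: "bij_betw \<phi> (V \<union> (\<lambda>v. v + (1/2) *\<^sub>R axis k 1) ` V) (carrier G)"
    and ik: "i \<noteq> k" and gen: "generate G {\<phi> (axis i 1)} = carrier G"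
  shows "lattice_tiling (cluster V) {x \<in> half_lattice k. \<phi> x = \<one>}"
proof -
  define h :: "real^'n" where "h = (1/2) *\<^sub>R axis k 1"
  define W where "W = V \<union> (\<lambda>v. v + h) ` V"
  define K where "K = {x \<in> half_lattice k. \<phi> x = \<one>}"
  have VM: "v \<in> half_lattice k" if "v \<in> V" for v using intV hl_int that by blast
  have WM: "W \<subseteq> half_lattice k" using VM hl_add[OF VM hl_half] by (auto simp: W_def h_def)
  have bijW: "bij_betw \<phi> W (carrier G)" using bij by (simp add: W_def h_def)
  have decomp: "\<exists>w\<in>W. m - w \<in> K" if m: "m \<in> half_lattice k" for m
  proof -
    obtain w where w: "w \<in> W" "\<phi> w = \<phi> m"
      using bijW phi_carrier[OF m] by (metis bij_betw_iff_bijections)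
    have wM: "w \<in> half_lattice k" using w WM by blast
    have "\<phi> (m - w) = \<one>" using phi_diff[OF m wM] w phi_carrier[OF m] by simp
    then show ?thesis using w hl_diff[OF m wM] by (auto simp: K_def)
  qed
  have uniq: "l = l'" if "w \<in> W" "w' \<in> W" "l \<in> K" "l' \<in> K" "w + l = w' + l'" for w w' l l'
  proof -
    have wM: "w \<in> half_lattice k" "w' \<in> half_lattice k" using that WM by blast+
    have lM: "l \<in> half_lattice k" "\<phi> l = \<one>" "l' \<in> half_lattice k" "\<phi> l' = \<one>"
      using that by (auto simp: K_def)
    have "\<phi> (w + l) = \<phi> w" "\<phi> (w' + l') = \<phi> w'"
      using phi_add[OF wM(1) lM(1)] phi_add[OF wM(2) lM(3)] lM phi_carrier[OF wM(1)] phi_carrier[OF wM(2)]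
      by simp_all
    then have "\<phi> w = \<phi> w'" using that by simp
    then have "w = w'" using bijW that by (metis bij_betw_iff_bijections)
    then show ?thesis using that by simp
  qed
  have cubeW: "\<exists>w\<in>W. z \<in> hb k (w + l)" if "z \<in> unit_cube (v + l)" "v \<in> V" for z v l
  proof -
    from cube_hb[OF that(1), of k] have "z \<in> hb k (v + l) \<or> z \<in> hb k ((v + h) + l)"
      by (simp add: h_def add_ac)
    then show ?thesis using that by (auto simp: W_def)
  qed
  have lat: "is_lattice K" unfolding K_def by (rule part1[OF finV intV bij ik gen])
  have cover: "(\<Union>l\<in>K. (\<lambda>x. x + l) ` cluster V) = UNIV"
  proof -
    have "y \<in> (\<Union>l\<in>K. (\<lambda>x. x + l) ` cluster V)" for y :: "real^'n"
    proof -
    obtain m where m: "m \<in> half_lattice k" "y \<in> hb k m" using hb_cover by blast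
    obtain w where w: "w \<in> W" "m - w \<in> K" using decomp[OF m(1)] by blast
    define l where "l = m - w"
    have "\<exists>v\<in>V. y \<in> unit_cube (v + l)"
    proof (cases "w \<in> V")
      case True
      have "w + l = m" by (simp add: l_def)
      then have "y \<in> unit_cube (w + l)" using m hb_cube1[of k m] by auto
      then show ?thesis using True by blast
    next
      case False
      then obtain v where v: "v \<in> V" "w = v + h" using w by (auto simp: W_def)
      then have "m = (v + l) + (1/2) *\<^sub>R axis k 1" by (simp add: l_def h_def)
      then show ?thesis using m hb_cube2[of k "v + l"] v by auto
    qed
    then show "y \<in> (\<Union>l\<in>K. (\<lambda>x. x + l) ` cluster V)"
      using w by (auto simp: translate_cluster l_def)
    qed
    then show ?thesis by blast
  qed
  have disj: "interior ((\<lambda>x. x + l) ` cluster V) \<inter> interior ((\<lambda>x. x + l') ` cluster V) = {}"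
    if l: "l \<in> K" "l' \<in> K" "l \<noteq> l'" for l l'
  proof (rule ccontr)
    assume "\<not> ?thesis"
    then obtain y where y: "y \<in> interior ((\<lambda>x. x + l) ` cluster V)" "y \<in> interior ((\<lambda>x. x + l') ` cluster V)"
      by blast
    obtain e1 where e1: "e1 > 0" "ball y e1 \<subseteq> (\<lambda>x. x + l) ` cluster V" using y(1) mem_interior by blast
    obtain e2 where e2: "e2 > 0" "ball y e2 \<subseteq> (\<lambda>x. x + l') ` cluster V" using y(2) mem_interior by blast
    obtain z where z: "dist y z < min e1 e2" "\<forall>j. 2 * z$j \<notin> \<int>"
      using generic_point[of "min e1 e2" y] e1 e2 by auto
    have "z \<in> (\<lambda>x. x + l) ` cluster V" "z \<in> (\<lambda>x. x + l') ` cluster V"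
      using z e1 e2 by auto
    then obtain v v' where v: "v \<in> V" "z \<in> unit_cube (v + l)" and v': "v' \<in> V" "z \<in> unit_cube (v' + l')"
      by (auto simp: translate_cluster)
    obtain w where w: "w \<in> W" "z \<in> hb k (w + l)" using cubeW[OF v(2) v(1)] by blast
    obtain w' where w': "w' \<in> W" "z \<in> hb k (w' + l')" using cubeW[OF v'(2) v'(1)] by blast
    have M: "w + l \<in> half_lattice k" "w' + l' \<in> half_lattice k"
      using w w' WM l hl_add by (auto simp: K_def)
    have "w + l = w' + l'" by (rule hb_uniq[OF z(2) M w(2) w'(2)])
    then show False using uniq[OF w(1) w'(1) l(1,2)] l(3) by blast
  qed
  show ?thesis unfolding lattice_tiling_def K_def[symmetric] using lat cover disj by blast
qed

end



lemma face_dim: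
  fixes v :: "real^'n" and i k :: 'n
  assumes ik: "i \<noteq> k"
  shows "aff_dim (unit_cube v \<inter> unit_cube (v + axis i 1 - (1/2) *\<^sub>R axis k 1)) = int CARD('n) - 1"
proof -
  define S where "S = unit_cube v \<inter> unit_cube (v + axis i 1 - (1/2) *\<^sub>R axis k 1)"
  define Hyp :: "(real^'n) set" where "Hyp = {x. axis i 1 \<bullet> x = v$i + 1/2}"
  define p :: "real^'n" where "p = v + (1/2) *\<^sub>R axis i 1 - (1/4) *\<^sub>R axis k 1"
  define T :: "(real^'n) set" where "T = (\<Inter>j\<in>-{i}. {x. \<bar>x$j - p$j\<bar> < 1/4})"
  have openT: "open T" unfolding T_def
    by (intro open_INT ballI open_Collect_less continuous_intros) auto
  have ax: "axis i 1 \<bullet> x = x$i" for x :: "real^'n" by (simp add: inner_axis')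
  have "p \<in> Hyp" unfolding Hyp_def mem_Collect_eq ax using ik by (simp add: p_def axis_def)
  moreover have "p \<in> T" by (simp add: T_def)
  ultimately have pHT: "p \<in> Hyp \<inter> T" by blast
  have SH: "S \<subseteq> Hyp"
  proof
    fix x assume x: "x \<in> S"
    have "\<bar>x$i - v$i\<bar> \<le> 1/2" using x by (simp add: S_def unit_cube_def)
    moreover have "\<bar>x$i - (v + axis i 1 - (1/2) *\<^sub>R axis k 1)$i\<bar> \<le> 1/2"
      using x unfolding S_def unit_cube_def by blast
    ultimately have "\<bar>x$i - v$i\<bar> \<le> 1/2" "\<bar>x$i - (v$i + 1)\<bar> \<le> 1/2"
      using ik by (auto simp: axis_def)
    then show "x \<in> Hyp" by (simp add: Hyp_def ax abs_le_iff)
  qed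
  have HTS: "Hyp \<inter> T \<subseteq> S"
  proof
    fix x assume x: "x \<in> Hyp \<inter> T"
    then have xi: "x$i = v$i + 1/2" by (simp add: Hyp_def ax)
    have xj: "\<bar>x$j - p$j\<bar> < 1/4" if "j \<noteq> i" for j using x that by (auto simp: T_def)
    have "\<bar>x$j - v$j\<bar> \<le> 1/2 \<and> \<bar>x$j - (v + axis i 1 - (1/2) *\<^sub>R axis k 1)$j\<bar> \<le> 1/2" for j
    proof -
      consider "j = i" | "j = k" | "j \<noteq> i" "j \<noteq> k" by blast
      then show ?thesis
      proof cases
        case 1 then show ?thesis using xi ik by (simp add: axis_def)
      next
        case 2
        have a: "\<bar>x$k - (v$k - 1/4)\<bar> < 1/4" using xj[of k] ik by (simp add: p_def axis_def)
        have b: "(v + axis i 1 - (1/2) *\<^sub>R axis k 1)$k = v$k - 1/2" using ik by (simp add: axis_def)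
        show ?thesis unfolding 2 b using a by arith
      next
        case 3 then show ?thesis using xj[of j] by (auto simp: axis_def p_def abs_le_iff abs_less_iff)
      qed
    qed
    then show "x \<in> S" by (simp add: S_def unit_cube_def)
  qed
  have convH: "convex Hyp" unfolding Hyp_def by (rule convex_hyperplane)
  have dH: "aff_dim Hyp = int CARD('n) - 1" unfolding Hyp_def
    by (subst aff_dim_hyperplane) (auto simp: axis_eq_0_iff)
  have "aff_dim (Hyp \<inter> T) = aff_dim Hyp" using aff_dim_convex_Int_open[OF convH openT] pHT by blast
  then have "aff_dim Hyp \<le> aff_dim S" using aff_dim_subset[OF HTS] by simp
  moreover have "aff_dim S \<le> aff_dim Hyp" using aff_dim_subset[OF SH] .
  ultimately show ?thesis using dH by (simp add: S_def)
qed

lemma not_nb: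
  fixes v :: "real^'n" and i k :: 'n
  assumes ik: "i \<noteq> k"
  shows "\<not> cube_neighbors v (v + axis i 1 - (1/2) *\<^sub>R axis k 1)"
proof
  assume "cube_neighbors v (v + axis i 1 - (1/2) *\<^sub>R axis k 1)"
  then obtain j where j: "\<bar>v$j - (v + axis i 1 - (1/2) *\<^sub>R axis k 1)$j\<bar> = 1"
    "\<forall>r. r \<noteq> j \<longrightarrow> v$r = (v + axis i 1 - (1/2) *\<^sub>R axis k 1)$r"
    unfolding cube_neighbors_def by blast
  show False
  proof (cases "j = k")
    case True then show ?thesis using j(1) ik by (simp add: axis_def)
  next
    case False then show ?thesis using j(2) ik by (auto simp: axis_def dest: spec[of _ k])
  qed
qed




context hsetup begin

lemma part3:
  fixes V :: "(real^'n) set" and i :: 'n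
  assumes finV: "finite V" and intV: "\<forall>v\<in>V. integer_point v"
    and bij: "bij_betw \<phi> (V \<union> (\<lambda>v. v + (1/2) *\<^sub>R axis k 1) ` V) (carrier G)"
    and ik: "i \<noteq> k" and gen: "generate G {\<phi> (axis i 1)} = carrier G"
  shows "non_regular_tiling V {x \<in> half_lattice k. \<phi> x = \<one>}"
proof -
  define h :: "real^'n" where "h = (1/2) *\<^sub>R axis k 1"
  define W where "W = V \<union> (\<lambda>v. v + h) ` V"
  define K where "K = {x \<in> half_lattice k. \<phi> x = \<one>}"
  have VM: "v \<in> half_lattice k" if "v \<in> V" for v using intV hl_int that by blast
  have WM: "W \<subseteq> half_lattice k" using VM hl_add[OF VM hl_half] by (auto simp: W_def h_def)
  have bijW: "bij_betw \<phi> W (carrier G)" using bij by (simp add: W_def h_def)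
  have injW: "inj_on \<phi> W" using bijW by (simp add: bij_betw_def)
  have finG: "finite (carrier G)" using bij finV bij_betw_finite by (auto simp: W_def h_def)
  define g where "g = \<phi> (axis i 1)"
  have gc: "g \<in> carrier G" unfolding g_def by (rule phi_carrier[OF hl_axis])
  have N1: "ord g \<ge> 1" using ord_ge_1[OF finG gc] .
  have pows: "\<And>x. x \<in> carrier G \<Longrightarrow> \<exists>n::nat. x = g [^] n"
    using generate_pow_nat[OF gc] N1 gen by (auto simp: g_def)
  have kint: "v$k \<in> \<int>" if "v \<in> V" for v using intV that by (simp add: integer_point_def)
  have hk: "(v + h)$k = v$k + 1/2" for v by (simp add: h_def)
  have phiV: "\<phi> (v + axis i 1) = \<phi> v \<otimes> g" if "v \<in> V" for v
    using phi_add[OF VM[OF that] hl_axis] by (simp add: g_def)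
  have "\<one> \<in> carrier G" by simp
  then obtain w0 where "w0 \<in> W" using bijW by (metis bij_betw_iff_bijections)
  then obtain v0 where v0: "v0 \<in> V" by (auto simp: W_def)
  have "\<exists>v\<in>V. \<phi> (v + axis i 1) \<notin> \<phi> ` V"
  proof (rule ccontr)
    assume "\<not> ?thesis"
    then have A: "\<forall>v\<in>V. \<phi> v \<otimes> g \<in> \<phi> ` V" using phiV by auto
    have cl: "\<forall>x\<in>\<phi> ` V. x \<otimes> g [^] n \<in> \<phi> ` V" for n :: nat
    proof (induction n)
      case 0 then show ?case using VM phi_carrier by auto
    next
      case (Suc n)
      show ?case
      proof
        fix x assume x: "x \<in> \<phi> ` V"
        then obtain v' where v': "v' \<in> V" "x \<otimes> g [^] n = \<phi> v'" using Suc by blast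
        have xc: "x \<in> carrier G" using x VM phi_carrier by auto
        have "x \<otimes> g [^] Suc n = (x \<otimes> g [^] n) \<otimes> g" using xc gc by (simp add: m_assoc nat_pow_Suc)
        then show "x \<otimes> g [^] Suc n \<in> \<phi> ` V" using v' A by simp
      qed
    qed
    obtain v where v: "v \<in> V" using v0 by blast
    have vhM: "v + h \<in> half_lattice k" using WM v by (auto simp: W_def)
    have c0: "\<phi> v0 \<in> carrier G" using phi_carrier[OF VM[OF v0]] .
    have c1: "\<phi> (v + h) \<in> carrier G" using phi_carrier[OF vhM] .
    obtain n :: nat where n: "inv (\<phi> v0) \<otimes> \<phi> (v + h) = g [^] n" using pows c0 c1 by (meson m_closed inv_closed)
    have "\<phi> (v + h) = \<phi> v0 \<otimes> (inv (\<phi> v0) \<otimes> \<phi> (v + h))" using c0 c1 by (simp add: m_assoc[symmetric])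
    also have "\<dots> \<in> \<phi> ` V" using cl[of n] v0 n by auto
    finally obtain v' where v': "v' \<in> V" "\<phi> (v + h) = \<phi> v'" by blast
    have "v + h = v'" using injW v v' by (auto simp: W_def inj_on_def)
    then have "v'$k = v$k + 1/2" using hk by metis
    then show False using kint[OF v] kint[OF v'(1)] half_not_int by metis
  qed
  then obtain v where v: "v \<in> V" "\<phi> (v + axis i 1) \<notin> \<phi> ` V" by blast
  have veM: "v + axis i 1 \<in> half_lattice k" using hl_add[OF VM[OF v(1)] hl_axis] .
  obtain w where w: "w \<in> W" "\<phi> w = \<phi> (v + axis i 1)"
    using bijW phi_carrier[OF veM] by (metis bij_betw_iff_bijections)
  have "w \<notin> V" using w(2) v(2) by (metis image_eqI)
  then obtain v' where v': "v' \<in> V" "w = v' + h" using w(1) by (auto simp: W_def)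
  have wM: "w \<in> half_lattice k" using w WM by blast
  define \<kappa> where "\<kappa> = (v + axis i 1) - w"
  have kK: "\<kappa> \<in> K" using phi_diff[OF veM wM] w phi_carrier[OF veM] hl_diff[OF veM wM]
    by (simp add: K_def \<kappa>_def)
  have 0: "0 \<in> K" by (simp add: K_def phi_zero hl_zero)
  have kc: "v' + \<kappa> = v + axis i 1 - (1/2) *\<^sub>R axis k 1" by (simp add: \<kappa>_def v' h_def)
  have kne: "0 \<noteq> \<kappa>"
  proof
    assume "0 = \<kappa>"
    then have "(v' + \<kappa>)$k = v'$k" by simp
    then have "v$k = v'$k + 1/2" unfolding kc using ik by (simp add: axis_def)
    then show False using kint[OF v(1)] kint[OF v'(1)] half_not_int by metis
  qed
  have "0 \<noteq> \<kappa> \<and> aff_dim (unit_cube (v + 0) \<inter> unit_cube (v' + \<kappa>)) = int CARD('n) - 1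
        \<and> \<not> cube_neighbors (v + 0) (v' + \<kappa>)"
    using kne face_dim[OF ik, of v] not_nb[OF ik, of v] unfolding kc by simp
  then show ?thesis unfolding non_regular_tiling_def K_def[symmetric]
    using 0 kK v(1) v'(1) by blast
qed

end

theorem theorem4:
  fixes V :: "(real^'n) set" and k :: 'n
    and G :: "('g, 'b) monoid_scheme" and \<phi> :: "real^'n \<Rightarrow> 'g"
  assumes "finite V"
    and "\<forall>v\<in>V. integer_point v"
    and "comm_group G"
    and "order G = 2 * card V"
    and "\<phi> \<in> hom (half_lattice_group k) G"
    and "bij_betw \<phi> (V \<union> (\<lambda>v. v + (1/2) *\<^sub>R axis k 1) ` V) (carrier G)"
    and "\<exists>i. i \<noteq> k \<and> generate G {\<phi> (axis i 1)} = carrier G"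
  shows "\<exists>L. lattice_tiling (cluster V) L \<and> non_regular_tiling V L"
proof -
  interpret H: hsetup G \<phi> k using assms(3,5) by (simp add: hsetup_def hsetup_axioms_def)
  obtain i where i: "i \<noteq> k" "generate G {\<phi> (axis i 1)} = carrier G" using assms(7) by blast
  show ?thesis
    using H.part2[OF assms(1,2,6) i] H.part3[OF assms(1,2,6) i] by blast
qed


end
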